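(* Fix $d\geq 1$. Let ${\boldsymbol{\rho}}=(\rho_1,\dots,\rho_m)$ and ${\boldsymbol{\tau}}=(\tau_1,\dots,\tau_n)$ be contraction vectors (in ${\mathbb R}^d$), and assume that ${\boldsymbol{\rho}}$ is equivalent to ${\boldsymbol{\tau}}$. Then ${\mathcal D}({\boldsymbol{\rho}})\sim{\mathcal D}({\boldsymbol{\tau}})$, i.e. every set $E\in{\mathcal D}({\boldsymbol{\rho}})$ and every set $F\in{\mathcal D}({\boldsymbol{\tau}})$ are Lipschitz equivalent.
   Context: Two compact sets $E,F\subset{\mathbb R}^d$ are Lipschitz equivalent if there is a bijection $f:E\to F$ and a constant $C>0$ with $C^{-1}|x-y|\le|f(x)-f(y)|\le C|x-y|$ for all $x,y\in E$. A contraction vector is ${\boldsymbol{\rho}}=(\rho_1,\dots,\rho_m)$ with each $\rho_j\in(0,1)$ and $\sum_{j=1}^m\rho_j^d<1$. ${\mathcal D}({\boldsymbol{\rho}})$ denotes the set of all dust-like self-similar sets in ${\mathbb R}^d$ that are attractors of some iterated function system $\{\phi_1,\dots,\phi_m\}$ of contracting similarities on ${\mathbb R}^d$, $\phi_j$ having ratio $\rho_j$; dust-like means the sets $\phi_j(K)$, $j=1,\dots,m$, are pairwise disjoint, where $K$ is the attractor (the unique nonempty compact set with $K=\bigcup_j\phi_j(K)$). It is known that any two sets in ${\mathcal D}({\boldsymbol{\rho}})$ are Lipschitz equivalent, and ${\mathcal D}({\boldsymbol{\rho}})\sim{\mathcal D}({\boldsymbol{\tau}})$ means that sets of the two classes are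 Lipschitz equivalent. Let $\Sigma_m$ be the set of infinite words over $\{1,\dots,m\}$ and $\Sigma_m^*$ the set of nonempty finite words; for ${\mathbf i}\in\Sigma_m^*$, $[{\mathbf i}]$ is the set of infinite words beginning with ${\mathbf i}$. A finite set $\{{\mathbf j}_1,\dots,{\mathbf j}_n\}\subset\Sigma_m^*$ is a cut set if the cylinders $[{\mathbf j}_1],\dots,[{\mathbf j}_n]$ are pairwise disjoint with union $\Sigma_m$. For ${\mathbf i}=i_1\cdots i_k$ write ${\boldsymbol{\rho}}_{\mathbf i}=\rho_{i_1}\cdots\rho_{i_k}$. The contraction vector ${\boldsymbol{\tau}}=(\tau_1,\dots,\tau_n)$ is derived from ${\boldsymbol{\rho}}$ if there is a cut set $\{{\mathbf j}_1,\dots,{\mathbf j}_n\}$ of $\Sigma_m$ with ${\boldsymbol{\tau}}=({\boldsymbol{\rho}}_{{\mathbf j}_1},\dots,{\boldsymbol{\rho}}_{{\mathbf j}_n})$. Two contraction vectors ${\boldsymbol{\rho}},{\boldsymbol{\tau}}$ are equivalent if there is a finite sequence ${\boldsymbol{\rho}}={\boldsymbol{\rho}}_1,{\boldsymbol{\rho}}_2,\dots,{\boldsymbol{\rho}}_N={\boldsymbol{\tau}}$ of contraction vectors such that for each $1\le j<N$, ${\boldsymbol{\rho}}_{j+1}$ is derived from ${\boldsymbol{\rho}}_j$ or ${\boldsymbol{\rho}}_j$ is derived from ${\boldsymbol{\rho}}_{j+1}$. *)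

theory Defs
  imports "HOL-Analysis.Analysis"
begin

text \<open>A contraction vector in R^d: a nonempty list of ratios in (0,1) with sum of d-th powers < 1.
  Letters are 0-indexed: the alphabet of a vector rho is {0..<length rho}.\<close>
definition contraction_vector :: "nat \<Rightarrow> real list \<Rightarrow> bool" where
  "contraction_vector d rho \<longleftrightarrow> rho \<noteq> [] \<and> (\<forall>r\<in>set rho. 0 < r \<and> r < 1)
      \<and> (\<Sum>r\<leftarrow>rho. r ^ d) < 1"

definition infwords :: "nat \<Rightarrow> (nat \<Rightarrow> nat) set" where
  "infwords m = {w. \<forall>k. w k < m}"

definition finwords :: "nat \<Rightarrow> nat list set" where
  "finwords m = {i. i \<noteq> [] \<and> (\<forall>a\<in>set i. a < m)}"

definition cylinder :: "nat \<Rightarrow> nat list \<Rightarrow> (nat \<Rightarrow> nat) set" where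
  "cylinder m i = {w \<in> infwords m. \<forall>k<length i. w k = i ! k}"

definition cut_set :: "nat \<Rightarrow> nat list set \<Rightarrow> bool" where
  "cut_set m J \<longleftrightarrow> finite J \<and> J \<subseteq> finwords m
     \<and> (\<forall>i\<in>J. \<forall>j\<in>J. i \<noteq> j \<longrightarrow> cylinder m i \<inter> cylinder m j = {})
     \<and> (\<Union>j\<in>J. cylinder m j) = infwords m"

definition word_ratio :: "real list \<Rightarrow> nat list \<Rightarrow> real" where
  "word_ratio rho i = (\<Prod>a\<leftarrow>i. rho ! a)"

definition derived_from :: "real list \<Rightarrow> real list \<Rightarrow> bool" where
  "derived_from tau rho \<longleftrightarrow> (\<exists>js. distinct js \<and> cut_set (length rho) (set js)
      \<and> tau = map (word_ratio rho) js)"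

definition equiv_step :: "nat \<Rightarrow> real list \<Rightarrow> real list \<Rightarrow> bool" where
  "equiv_step d rho tau \<longleftrightarrow> contraction_vector d rho \<and> contraction_vector d tau
      \<and> (derived_from tau rho \<or> derived_from rho tau)"

definition equivalent_cv :: "nat \<Rightarrow> real list \<Rightarrow> real list \<Rightarrow> bool" where
  "equivalent_cv d rho tau \<longleftrightarrow> contraction_vector d rho \<and> (equiv_step d)\<^sup>*\<^sup>* rho tau"

text \<open>Dust-like self-similar sets with contraction vector rho in the euclidean space 'a.
  The attractor is the unique nonempty compact invariant set.\<close>
definition dustlike :: "real list \<Rightarrow> 'a::euclidean_space set set" where
  "dustlike rho = {K. \<exists>phi :: nat \<Rightarrow> 'a \<Rightarrow> 'a.
      (\<forall>j<length rho. \<forall>x y. dist (phi j x) (phi j y) = rho ! j * dist x y)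
    \<and> K \<noteq> {} \<and> compact K \<and> K = (\<Union>j<length rho. phi j ` K)
    \<and> (\<forall>i<length rho. \<forall>j<length rho. i \<noteq> j \<longrightarrow> phi i ` K \<inter> phi j ` K = {})}"

definition lipschitz_equivalent :: "'a::metric_space set \<Rightarrow> 'b::metric_space set \<Rightarrow> bool" where
  "lipschitz_equivalent E F \<longleftrightarrow> (\<exists>f C. bij_betw f E F \<and> C > 0 \<and>
     (\<forall>x\<in>E. \<forall>y\<in>E. inverse C * dist x y \<le> dist (f x) (f y) \<and> dist (f x) (f y) \<le> C * dist x y))"

end

theory Submission
  imports Defs
begin


definition shft :: "(nat\<Rightarrow>nat) \<Rightarrow> nat \<Rightarrow> nat" where "shft v = (\<lambda>i. v (Suc i))"
definition pr :: "real list \<Rightarrow> (nat\<Rightarrow>nat) \<Rightarrow> nat \<Rightarrow> real" where "pr r w k = (\<Prod>i<k. r ! (w i))"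
definition fd :: "(nat\<Rightarrow>nat) \<Rightarrow> (nat\<Rightarrow>nat) \<Rightarrow> nat" where "fd w v = (LEAST k. w k \<noteq> v k)"
definition dl :: "real list \<Rightarrow> (nat\<Rightarrow>nat) \<Rightarrow> (nat\<Rightarrow>nat) \<Rightarrow> real" where
  "dl r w v = (if w = v then 0 else pr r w (fd w v))"
primrec psiw :: "(nat \<Rightarrow> 'x \<Rightarrow> 'x) \<Rightarrow> (nat\<Rightarrow>nat) \<Rightarrow> nat \<Rightarrow> 'x \<Rightarrow> 'x" where
  "psiw psi v 0 = id" | "psiw psi v (Suc k) = psi (v 0) \<circ> psiw psi (shft v) k"

definition lipeq :: "'x set \<Rightarrow> ('x \<Rightarrow> 'x \<Rightarrow> real) \<Rightarrow> 'y set \<Rightarrow> ('y \<Rightarrow> 'y \<Rightarrow> real) \<Rightarrow> bool" where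
  "lipeq A dA B dB \<longleftrightarrow> (\<exists>f C. bij_betw f A B \<and> C > 0 \<and>
     (\<forall>x\<in>A. \<forall>y\<in>A. inverse C * dA x y \<le> dB (f x) (f y) \<and> dB (f x) (f y) \<le> C * dA x y))"

lemma lipeq_refl: "lipeq A d A d"
  unfolding lipeq_def by (rule exI[of _ id], rule exI[of _ 1]) auto

lemma lipeq_sym: assumes "lipeq A dA B dB" shows "lipeq B dB A dA"
proof -
  obtain f C where f: "bij_betw f A B" "C > 0" and
    h: "\<forall>x\<in>A. \<forall>y\<in>A. inverse C * dA x y \<le> dB (f x) (f y) \<and> dB (f x) (f y) \<le> C * dA x y"
    using assms unfolding lipeq_def by blast
  let ?g = "inv_into A f"
  have g: "bij_betw ?g B A" using f(1) by (rule bij_betw_inv_into)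
  have "\<forall>x\<in>B. \<forall>y\<in>B. inverse C * dB x y \<le> dA (?g x) (?g y) \<and> dA (?g x) (?g y) \<le> C * dB x y"
  proof (intro ballI)
    fix x y assume xy: "x \<in> B" "y \<in> B"
    have gx: "?g x \<in> A" "f (?g x) = x" using xy f(1) by (auto simp: bij_betw_def inv_into_into f_inv_into_f)
    have gy: "?g y \<in> A" "f (?g y) = y" using xy f(1) by (auto simp: bij_betw_def inv_into_into f_inv_into_f)
    have 1: "inverse C * dA (?g x) (?g y) \<le> dB x y" "dB x y \<le> C * dA (?g x) (?g y)"
      using h gx gy by metis+
    have "inverse C * dB x y \<le> dA (?g x) (?g y)"
      using 1(2) f(2) by (simp add: field_simps)
    moreover have "dA (?g x) (?g y) \<le> C * dB x y"
      using 1(1) f(2) by (simp add: field_simps)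
    ultimately show "inverse C * dB x y \<le> dA (?g x) (?g y) \<and> dA (?g x) (?g y) \<le> C * dB x y" by simp
  qed
  then show ?thesis unfolding lipeq_def using g f(2) by blast
qed

lemma lipeq_trans: assumes "lipeq A dA B dB" "lipeq B dB E dE" shows "lipeq A dA E dE"
proof -
  obtain f C where f: "bij_betw f A B" "C > 0" and
    h: "\<forall>x\<in>A. \<forall>y\<in>A. inverse C * dA x y \<le> dB (f x) (f y) \<and> dB (f x) (f y) \<le> C * dA x y"
    using assms(1) unfolding lipeq_def by blast
  obtain g D where g: "bij_betw g B E" "D > 0" and
    h2: "\<forall>x\<in>B. \<forall>y\<in>B. inverse D * dB x y \<le> dE (g x) (g y) \<and> dE (g x) (g y) \<le> D * dB x y"
    using assms(2) unfolding lipeq_def by blast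
  have "\<forall>x\<in>A. \<forall>y\<in>A. inverse (C*D) * dA x y \<le> dE (g (f x)) (g (f y)) \<and> dE (g (f x)) (g (f y)) \<le> (C*D) * dA x y"
  proof (intro ballI)
    fix x y assume xy: "x \<in> A" "y \<in> A"
    have fx: "f x \<in> B" "f y \<in> B" using xy f(1) by (auto simp: bij_betw_def)
    have a: "inverse C * dA x y \<le> dB (f x) (f y)" "dB (f x) (f y) \<le> C * dA x y" using h xy by auto
    have b: "inverse D * dB (f x) (f y) \<le> dE (g (f x)) (g (f y))" "dE (g (f x)) (g (f y)) \<le> D * dB (f x) (f y)"
      using h2 fx by auto
    have "inverse (C*D) * dA x y = inverse D * (inverse C * dA x y)" by (simp add: field_simps)
    also have "\<dots> \<le> inverse D * dB (f x) (f y)" using a(1) g(2) by (simp add: mult_left_mono)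
    also have "\<dots> \<le> dE (g (f x)) (g (f y))" by (rule b(1))
    finally have 1: "inverse (C*D) * dA x y \<le> dE (g (f x)) (g (f y))" .
    have "dE (g (f x)) (g (f y)) \<le> D * dB (f x) (f y)" by (rule b(2))
    also have "\<dots> \<le> D * (C * dA x y)" using a(2) g(2) by (simp add: mult_left_mono)
    finally have 2: "dE (g (f x)) (g (f y)) \<le> (C*D) * dA x y" by (simp add: ac_simps)
    show "inverse (C*D) * dA x y \<le> dE (g (f x)) (g (f y)) \<and> dE (g (f x)) (g (f y)) \<le> (C*D) * dA x y"
      using 1 2 by simp
  qed
  moreover have "bij_betw (g \<circ> f) A E" using f(1) g(1) by (rule bij_betw_trans)
  ultimately show ?thesis unfolding lipeq_def using f(2) g(2)
    by (intro exI[of _ "g \<circ> f"] exI[of _ "C*D"]) auto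
qed

lemma pr_Suc: "pr r w (Suc k) = r ! (w 0) * pr r (shft w) k"
  unfolding pr_def shft_def by (simp add: prod.lessThan_Suc_shift del: prod.lessThan_Suc)

lemma shft_inf: "v \<in> infwords n \<Longrightarrow> shft v \<in> infwords n"
  unfolding infwords_def shft_def by auto

lemma psiw_prefix: "(\<forall>i<k. a i = b i) \<Longrightarrow> psiw psi a k = psiw psi b k"
proof (induction k arbitrary: a b)
  case 0 then show ?case by simp
next
  case (Suc k)
  have "psiw psi (shft a) k = psiw psi (shft b) k" using Suc.prems by (intro Suc.IH) (auto simp: shft_def)
  moreover have "a 0 = b 0" using Suc.prems by auto
  ultimately show ?case by simp
qed

lemma pr_prefix: "(\<forall>i<k. a i = b i) \<Longrightarrow> pr r a k = pr r b k"
  unfolding pr_def by (intro prod.cong) auto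

lemma pr_pos_le: assumes "v \<in> infwords (length r)" "\<forall>t<length r. 0 < r!t \<and> r!t < 1"
  shows "0 < pr r v k \<and> pr r v k \<le> Max (set r) ^ k"
proof -
  have ne: "r \<noteq> []" using assms(1) unfolding infwords_def by (metis length_0_conv not_less0 mem_Collect_eq)
  have "\<forall>i. 0 < r ! (v i) \<and> r ! (v i) \<le> Max (set r)"
    using assms unfolding infwords_def by (auto intro!: Max_ge)
  then have h: "\<forall>i. 0 < r ! (v i) \<and> r ! (v i) \<le> Max (set r)" .
  have "0 < pr r v k" unfolding pr_def using h by (intro prod_pos) auto
  moreover have "pr r v k \<le> (\<Prod>i<k. Max (set r))" unfolding pr_def
    using h by (intro prod_mono) (auto intro: less_imp_le)
  ultimately show ?thesis by simp
qed



locale dls =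
  fixes r :: "real list" and X :: "'x set" and d :: "'x \<Rightarrow> 'x \<Rightarrow> real" and psi :: "nat \<Rightarrow> 'x \<Rightarrow> 'x"
    and D c :: real
  assumes maps: "\<And>t x. t < length r \<Longrightarrow> x \<in> X \<Longrightarrow> psi t x \<in> X"
  and scale: "\<And>t x y. t < length r \<Longrightarrow> x \<in> X \<Longrightarrow> y \<in> X \<Longrightarrow> d (psi t x) (psi t y) = r!t * d x y"
  and cover: "\<And>x. x \<in> X \<Longrightarrow> \<exists>t<length r. x \<in> psi t ` X"
  and bnd: "\<And>x y. x \<in> X \<Longrightarrow> y \<in> X \<Longrightarrow> d x y \<le> D"
  and cpos: "c > 0"
  and sep: "\<And>s t x y. s < length r \<Longrightarrow> t < length r \<Longrightarrow> s \<noteq> t \<Longrightarrow> x \<in> X \<Longrightarrow> y \<in> X \<Longrightarrow> c \<le> d (psi s x) (psi t y)"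
  and dpos: "\<And>x y. x \<in> X \<Longrightarrow> y \<in> X \<Longrightarrow> 0 \<le> d x y"
  and dzero: "\<And>x. x \<in> X \<Longrightarrow> d x x = 0"
  and deq: "\<And>x y. x \<in> X \<Longrightarrow> y \<in> X \<Longrightarrow> d x y = 0 \<Longrightarrow> x = y"
  and ratio: "\<forall>t<length r. 0 < r!t \<and> r!t < 1"
  and surjh: "\<And>v. v \<in> infwords (length r) \<Longrightarrow> \<exists>x\<in>X. \<forall>k. x \<in> psiw psi v k ` X"
begin

lemma psi_inj: "t < length r \<Longrightarrow> x \<in> X \<Longrightarrow> y \<in> X \<Longrightarrow> psi t x = psi t y \<Longrightarrow> x = y"
  using scale[of t x y] dzero[of "psi t x"] maps[of t x] ratio deq[of x y] by auto

lemma disj: "s < length r \<Longrightarrow> t < length r \<Longrightarrow> x \<in> X \<Longrightarrow> y \<in> X \<Longrightarrow> psi s x = psi t y \<Longrightarrow> s = t"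
  using sep[of s t x y] dzero[of "psi s x"] maps[of s x] cpos by force

definition sig :: "'x \<Rightarrow> nat" where "sig x = (SOME t. t < length r \<and> x \<in> psi t ` X)"
definition T :: "'x \<Rightarrow> 'x" where "T x = (SOME y. y \<in> X \<and> x = psi (sig x) y)"

lemma sigT: assumes "x \<in> X" shows "sig x < length r \<and> T x \<in> X \<and> x = psi (sig x) (T x)"
proof -
  have "\<exists>t. t < length r \<and> x \<in> psi t ` X" using cover[OF assms] by blast
  then have s: "sig x < length r \<and> x \<in> psi (sig x) ` X" unfolding sig_def by (rule someI_ex)
  then have "\<exists>y. y \<in> X \<and> x = psi (sig x) y" by blast
  then have "T x \<in> X \<and> x = psi (sig x) (T x)" unfolding T_def by (rule someI_ex)
  with s show ?thesis by blast
qed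

lemma sig_unique: assumes "t < length r" "y \<in> X" "x = psi t y" shows "sig x = t \<and> T x = y"
proof -
  have x: "x \<in> X" using maps assms by simp
  from sigT[OF x] have h: "sig x < length r" "T x \<in> X" "x = psi (sig x) (T x)" by auto
  have "sig x = t" using disj[OF h(1) assms(1) h(2) assms(2)] h(3) assms(3) by simp
  moreover then have "T x = y" using psi_inj[OF assms(1) h(2) assms(2)] h(3) assms(3) by simp
  ultimately show ?thesis by simp
qed

definition addr :: "'x \<Rightarrow> nat \<Rightarrow> nat" where "addr x k = sig ((T ^^ k) x)"

lemma TX: "x \<in> X \<Longrightarrow> (T ^^ k) x \<in> X"
  by (induction k) (auto simp: sigT)

lemma addr_T: "addr (T x) = shft (addr x)"
  unfolding addr_def shft_def by (simp add: funpow_Suc_right del: funpow.simps)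

lemma addr_in: "x \<in> X \<Longrightarrow> addr x \<in> infwords (length r)"
  unfolding infwords_def addr_def using sigT TX by auto

lemma psiw_maps: "v \<in> infwords (length r) \<Longrightarrow> x \<in> X \<Longrightarrow> psiw psi v k x \<in> X"
proof (induction k arbitrary: v)
  case 0 then show ?case by simp
next
  case (Suc k)
  have "psiw psi (shft v) k x \<in> X" using Suc shft_inf by blast
  moreover have "v 0 < length r" using Suc.prems unfolding infwords_def by auto
  ultimately show ?case using maps by simp
qed

lemma psiw_scale: "v \<in> infwords (length r) \<Longrightarrow> x \<in> X \<Longrightarrow> y \<in> X \<Longrightarrow>
   d (psiw psi v k x) (psiw psi v k y) = pr r v k * d x y"
proof (induction k arbitrary: v)
  case 0 then show ?case by (simp add: pr_def)
next
  case (Suc k)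
  have v0: "v 0 < length r" using Suc.prems unfolding infwords_def by auto
  have "d (psiw psi v (Suc k) x) (psiw psi v (Suc k) y)
      = r ! (v 0) * d (psiw psi (shft v) k x) (psiw psi (shft v) k y)"
    using scale[OF v0] psiw_maps Suc.prems shft_inf by simp
  also have "\<dots> = r ! (v 0) * (pr r (shft v) k * d x y)" using Suc shft_inf by simp
  finally show ?case by (simp add: pr_Suc)
qed

lemma decomp: "x \<in> X \<Longrightarrow> psiw psi (addr x) k ((T ^^ k) x) = x"
proof (induction k arbitrary: x)
  case 0 then show ?case by simp
next
  case (Suc k)
  have tx: "T x \<in> X" using sigT Suc by auto
  have "psiw psi (addr x) (Suc k) ((T ^^ Suc k) x) = psi (sig x) (psiw psi (addr (T x)) k ((T ^^ k) (T x)))"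
    by (simp add: addr_T funpow_Suc_right del: funpow.simps) (simp add: addr_def)
  also have "\<dots> = psi (sig x) (T x)" using Suc.IH[OF tx] by simp
  also have "\<dots> = x" using sigT Suc by auto
  finally show ?case .
qed

lemma addr_inj: assumes "x \<in> X" "y \<in> X" "addr x = addr y" shows "x = y"
proof -
  let ?q = "Max (set r)"
  have ai: "addr x \<in> infwords (length r)" using addr_in assms by simp
  have ne: "r \<noteq> []" using ai unfolding infwords_def by auto
  have q1: "?q < 1" using ratio ne by (auto simp: in_set_conv_nth)
  have b: "d x y \<le> ?q ^ k * D" for k
  proof -
    have "d x y = d (psiw psi (addr x) k ((T ^^ k) x)) (psiw psi (addr x) k ((T ^^ k) y))"
      using decomp[OF assms(1), of k] decomp[OF assms(2), of k, folded assms(3)] by simp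
    also have "\<dots> = pr r (addr x) k * d ((T ^^ k) x) ((T ^^ k) y)"
      using psiw_scale ai TX assms by simp
    also have "\<dots> \<le> ?q ^ k * D"
    proof -
      have tx: "(T ^^ k) x \<in> X" "(T ^^ k) y \<in> X" using TX assms by auto
      show ?thesis
        using pr_pos_le[OF ai ratio, of k] bnd[OF tx] dpos[OF tx]
        by (intro mult_mono) (auto intro: order_trans)
    qed
    finally show ?thesis .
  qed
  have "d x y = 0"
  proof (rule ccontr)
    assume "d x y \<noteq> 0"
    then have p: "d x y > 0" using dpos assms by force
    then have Dp: "D > 0" using b[of 0] by simp
    obtain k where "?q ^ k < d x y / D" using real_arch_pow_inv[OF divide_pos_pos[OF p Dp] q1] by blast
    then have "?q ^ k * D < d x y" using Dp by (simp add: field_simps)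
    with b[of k] show False by simp
  qed
  then show ?thesis using deq assms by simp
qed

lemma addr_bounds: assumes "x \<in> X" "y \<in> X" "x \<noteq> y"
  shows "c * dl r (addr x) (addr y) \<le> d x y \<and> d x y \<le> D * dl r (addr x) (addr y)"
proof -
  let ?a = "addr x" and ?b = "addr y"
  have ne: "?a \<noteq> ?b" using addr_inj[OF assms(1,2)] assms(3) by auto
  define k where "k = fd ?a ?b"
  have ex: "\<exists>k. ?a k \<noteq> ?b k" using ne by auto
  have ak: "?a k \<noteq> ?b k" unfolding k_def fd_def by (rule LeastI_ex[OF ex])
  have pre: "\<forall>i<k. ?a i = ?b i" unfolding k_def fd_def using not_less_Least by blast
  have ai: "?a \<in> infwords (length r)" using addr_in assms by simp
  have dl: "dl r ?a ?b = pr r ?a k" using ne unfolding dl_def k_def by simp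
  have "d x y = d (psiw psi ?a k ((T ^^ k) x)) (psiw psi ?b k ((T ^^ k) y))"
    using decomp[OF assms(1), of k] decomp[OF assms(2), of k] by simp
  also have "\<dots> = d (psiw psi ?a k ((T ^^ k) x)) (psiw psi ?a k ((T ^^ k) y))"
    using psiw_prefix[OF pre, of psi] by simp
  also have "\<dots> = pr r ?a k * d ((T ^^ k) x) ((T ^^ k) y)"
    using psiw_scale ai TX assms by simp
  finally have e: "d x y = dl r ?a ?b * d ((T ^^ k) x) ((T ^^ k) y)" using dl by simp
  let ?x = "(T ^^ k) x" and ?y = "(T ^^ k) y"
  have "c \<le> d ?x ?y"
  proof -
    have hx: "sig ?x < length r" "T ?x \<in> X" "?x = psi (sig ?x) (T ?x)" using sigT TX assms by auto
    have hy: "sig ?y < length r" "T ?y \<in> X" "?y = psi (sig ?y) (T ?y)" using sigT TX assms by auto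
    have "sig ?x \<noteq> sig ?y" using ak unfolding addr_def by simp
    then have "c \<le> d (psi (sig ?x) (T ?x)) (psi (sig ?y) (T ?y))" by (rule sep[OF hx(1) hy(1) _ hx(2) hy(2)])
    then show ?thesis by (simp only: hx(3)[symmetric] hy(3)[symmetric])
  qed
  moreover have "d ?x ?y \<le> D" using bnd TX assms by simp
  moreover have "0 \<le> dl r ?a ?b" using dl pr_pos_le[OF ai ratio] by (simp add: less_imp_le)
  ultimately show ?thesis using e mult_right_mono[of c "d ?x ?y" "dl r ?a ?b"]
      mult_right_mono[of "d ?x ?y" D "dl r ?a ?b"] by (simp add: mult.commute)
qed

lemma addr_surj: assumes "v \<in> infwords (length r)" shows "\<exists>x\<in>X. addr x = v"
proof -
  obtain x where x: "x \<in> X" "\<forall>k. x \<in> psiw psi v k ` X" using surjh[OF assms] by blast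
  have step: "sig x = v 0 \<and> (\<forall>j. T x \<in> psiw psi (shft v) j ` X)"
    if H: "x \<in> X" "\<forall>k. x \<in> psiw psi v k ` X" "v \<in> infwords (length r)" for x v
  proof -
    have v0: "v 0 < length r" using H unfolding infwords_def by auto
    have "sig x = v 0 \<and> T x \<in> psiw psi (shft v) j ` X" for j
    proof -
      obtain z where z: "z \<in> X" "x = psi (v 0) (psiw psi (shft v) j z)"
        using H(2)[rule_format, of "Suc j"] by auto
      have w: "psiw psi (shft v) j z \<in> X" using psiw_maps[OF shft_inf[OF H(3)] z(1)] .
      from sig_unique[OF v0 w z(2)] z(1) show ?thesis by auto
    qed
    then show ?thesis by simp
  qed
  have "x \<in> X \<Longrightarrow> \<forall>k. x \<in> psiw psi v k ` X \<Longrightarrow> v \<in> infwords (length r) \<Longrightarrow> addr x k = v k" for k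
  proof (induction k arbitrary: x v)
    case 0 then show ?case using step unfolding addr_def by simp
  next
    case (Suc k)
    have "addr x (Suc k) = addr (T x) k" by (simp add: addr_T shft_def)
    also have "\<dots> = shft v k"
    proof (rule Suc.IH)
      show "T x \<in> X" using sigT Suc.prems(1) by simp
      show "\<forall>k. T x \<in> psiw psi (shft v) k ` X" using step[OF Suc.prems] by simp
      show "shft v \<in> infwords (length r)" using shft_inf Suc.prems(3) by simp
    qed
    finally show ?case by (simp add: shft_def)
  qed
  then show ?thesis using x assms by blast
qed

theorem lipeq_addr: "lipeq X d (infwords (length r)) (dl r)"
proof -
  have bij: "bij_betw addr X (infwords (length r))"
  proof -
    have "inj_on addr X" unfolding inj_on_def using addr_inj by auto
    moreover have "addr ` X = infwords (length r)"
    proof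
      show "addr ` X \<subseteq> infwords (length r)" using addr_in by auto
      show "infwords (length r) \<subseteq> addr ` X" using addr_surj by (auto simp: image_iff)
    qed
    ultimately show ?thesis unfolding bij_betw_def by simp
  qed
  define C where "C = max 1 (max D (1/c))"
  have C: "C > 0" "C \<ge> D" "C \<ge> 1/c" unfolding C_def by auto
  have "\<forall>x\<in>X. \<forall>y\<in>X. inverse C * d x y \<le> dl r (addr x) (addr y) \<and> dl r (addr x) (addr y) \<le> C * d x y"
  proof (intro ballI)
    fix x y assume xy: "x \<in> X" "y \<in> X"
    show "inverse C * d x y \<le> dl r (addr x) (addr y) \<and> dl r (addr x) (addr y) \<le> C * d x y"
    proof (cases "x = y")
      case True then show ?thesis using dzero xy by (simp add: dl_def)
    next
      case False
      have b: "c * dl r (addr x) (addr y) \<le> d x y" "d x y \<le> D * dl r (addr x) (addr y)"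
        using addr_bounds[OF xy False] by auto
      have dl0: "0 \<le> dl r (addr x) (addr y)" using pr_pos_le[OF addr_in[OF xy(1)] ratio]
        unfolding dl_def by (simp add: less_imp_le)
      have d0: "0 \<le> d x y" using dpos xy by simp
      have "d x y \<le> C * dl r (addr x) (addr y)"
        using b(2) mult_right_mono[OF C(2) dl0] by linarith
      then have 1: "inverse C * d x y \<le> dl r (addr x) (addr y)" using C(1) by (simp add: field_simps)
      have "dl r (addr x) (addr y) \<le> (1/c) * d x y" using b(1) cpos by (simp add: field_simps)
      also have "\<dots> \<le> C * d x y" using mult_right_mono[OF C(3) d0] .
      finally show ?thesis using 1 by simp
    qed
  qed
  then show ?thesis unfolding lipeq_def using bij C(1) by (intro exI[of _ addr] exI[of _ C]) simp
qed

end


lemma psiw_Suc_right: "psiw psi v (Suc k) = psiw psi v k \<circ> psi (v k)"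
proof (induction k arbitrary: v)
  case 0 then show ?case by simp
next
  case (Suc k)
  have "psiw psi v (Suc (Suc k)) = psi (v 0) \<circ> psiw psi (shft v) (Suc k)" by simp
  also have "\<dots> = psi (v 0) \<circ> (psiw psi (shft v) k \<circ> psi (shft v k))" using Suc.IH[of "shft v"] by (simp only:)
  finally show ?case by (simp add: fun_eq_iff shft_def)
qed

lemma finite_uniform_pos:
  assumes "finite I" "\<forall>i\<in>I. \<exists>e>0. \<forall>x\<in>A i. \<forall>y\<in>B i. e \<le> (dd :: 'b \<Rightarrow> 'c \<Rightarrow> real) x y"
  shows "\<exists>e>0. \<forall>i\<in>I. \<forall>x\<in>A i. \<forall>y\<in>B i. e \<le> dd x y"
  using assms
proof (induction I rule: finite_induct)
  case empty then show ?case by (intro exI[of _ 1]) simp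
next
  case (insert a I)
  obtain e where e: "e > 0" "\<forall>i\<in>I. \<forall>x\<in>A i. \<forall>y\<in>B i. e \<le> dd x y" using insert by auto
  obtain e' where e': "e' > 0" "\<forall>x\<in>A a. \<forall>y\<in>B a. e' \<le> dd x y" using insert.prems by auto
  show ?case using e e' by (intro exI[of _ "min e e'"]) (auto intro: order_trans[OF min.cobounded1] order_trans[OF min.cobounded2])
qed

lemma cv_ratio: "contraction_vector dd r \<Longrightarrow> \<forall>t<length r. 0 < r!t \<and> r!t < 1"
  unfolding contraction_vector_def by (auto dest: nth_mem)

lemma geometric:
  fixes K :: "'a::euclidean_space set"
  assumes cv: "contraction_vector dd rho" and K: "K \<in> dustlike rho"
  shows "lipeq K dist (infwords (length rho)) (dl rho)"
proof -
  obtain phi :: "nat \<Rightarrow> 'a \<Rightarrow> 'a" where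
    sc: "\<forall>j<length rho. \<forall>x y. dist (phi j x) (phi j y) = rho ! j * dist x y" and
    ne: "K \<noteq> {}" and cp: "compact K" and inv: "K = (\<Union>j<length rho. phi j ` K)" and
    dj: "\<forall>i<length rho. \<forall>j<length rho. i \<noteq> j \<longrightarrow> phi i ` K \<inter> phi j ` K = {}"
    using K unfolding dustlike_def by blast
  have rat: "\<forall>t<length rho. 0 < rho!t \<and> rho!t < 1" using cv_ratio[OF cv] .
  have sub: "phi t ` K \<subseteq> K" if "t < length rho" for t using inv that by blast
  have psc: "dist (psiw phi v k x) (psiw phi v k y) = pr rho v k * dist x y"
    if "v \<in> infwords (length rho)" for v k x y
    using that
  proof (induction k arbitrary: v)
    case 0 then show ?case by (simp add: pr_def)
  next
    case (Suc k)
    have v0: "v 0 < length rho" using Suc.prems unfolding infwords_def by auto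
    show ?case using sc v0 Suc.IH[OF shft_inf[OF Suc.prems]] by (simp add: pr_Suc)
  qed
  have cont: "continuous_on S (psiw phi v k)" if "v \<in> infwords (length rho)" for v k S
  proof (rule lipschitz_on_continuous_on)
    show "(pr rho v k)-lipschitz_on S (psiw phi v k)"
      using psc[OF that] pr_pos_le[OF that rat, of k] by (intro lipschitz_onI) (auto intro: less_imp_le)
  qed
  have cont1: "continuous_on S (phi t)" if "t < length rho" for t S
  proof (rule lipschitz_on_continuous_on)
    show "(rho!t)-lipschitz_on S (phi t)"
      using sc that rat by (intro lipschitz_onI) (auto intro: less_imp_le)
  qed
  obtain D where D: "\<forall>x\<in>K. \<forall>y\<in>K. dist x y \<le> D"
    using compact_imp_bounded[OF cp] unfolding bounded_two_points by blast
  have ex: "\<forall>p\<in>{p. fst p < length rho \<and> snd p < length rho \<and> fst p \<noteq> snd p}.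
          \<exists>e>0. \<forall>x\<in>phi (fst p) ` K. \<forall>y\<in>phi (snd p) ` K. e \<le> dist x y"
  proof
    fix p assume p: "p \<in> {p. fst p < length rho \<and> snd p < length rho \<and> fst p \<noteq> snd p}"
    have c1: "compact (phi (fst p) ` K)" using compact_continuous_image[OF cont1 cp] p by auto
    have c2: "compact (phi (snd p) ` K)" using compact_continuous_image[OF cont1 cp] p by auto
    show "\<exists>e>0. \<forall>x\<in>phi (fst p) ` K. \<forall>y\<in>phi (snd p) ` K. e \<le> dist x y"
      using separate_compact_closed[OF c1 compact_imp_closed[OF c2]] dj p by auto
  qed
  have fin: "finite {p. fst p < length rho \<and> snd p < length rho \<and> fst p \<noteq> snd p}"
    by (rule finite_subset[of _ "{..<length rho} \<times> {..<length rho}"]) auto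
  obtain c where c: "c > 0" "\<forall>p\<in>{p. fst p < length rho \<and> snd p < length rho \<and> fst p \<noteq> snd p}.
          \<forall>x\<in>phi (fst p) ` K. \<forall>y\<in>phi (snd p) ` K. c \<le> dist x y"
    using finite_uniform_pos[where dd=dist and A="\<lambda>p. phi (fst p) ` K" and B="\<lambda>p. phi (snd p) ` K", OF fin ex] by blast
  have "dls rho K dist phi D c"
  proof
    show "\<And>t x. t < length rho \<Longrightarrow> x \<in> K \<Longrightarrow> phi t x \<in> K" using sub by blast
    show "\<And>t x y. t < length rho \<Longrightarrow> x \<in> K \<Longrightarrow> y \<in> K \<Longrightarrow> dist (phi t x) (phi t y) = rho ! t * dist x y"
      using sc by blast
    show "\<And>x. x \<in> K \<Longrightarrow> \<exists>t<length rho. x \<in> phi t ` K" using inv by blast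
    show "\<And>x y. x \<in> K \<Longrightarrow> y \<in> K \<Longrightarrow> dist x y \<le> D" using D by blast
    show "0 < c" by (rule c(1))
    show "\<And>s t x y. s < length rho \<Longrightarrow> t < length rho \<Longrightarrow> s \<noteq> t \<Longrightarrow> x \<in> K \<Longrightarrow> y \<in> K \<Longrightarrow> c \<le> dist (phi s x) (phi t y)"
    proof -
      fix s t x y assume h: "s < length rho" "t < length rho" "s \<noteq> t" "x \<in> K" "y \<in> K"
      then have "(s,t) \<in> {p. fst p < length rho \<and> snd p < length rho \<and> fst p \<noteq> snd p}" by simp
      with c(2) h(4,5) show "c \<le> dist (phi s x) (phi t y)" by fastforce
    qed
    show "\<And>x y. x \<in> K \<Longrightarrow> y \<in> K \<Longrightarrow> 0 \<le> dist x y" by simp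
    show "\<And>x. x \<in> K \<Longrightarrow> dist x x = 0" by simp
    show "\<And>x y. x \<in> K \<Longrightarrow> y \<in> K \<Longrightarrow> dist x y = 0 \<Longrightarrow> x = y" by simp
    show "\<forall>t<length rho. 0 < rho ! t \<and> rho ! t < 1" by (rule rat)
    show "\<And>v. v \<in> infwords (length rho) \<Longrightarrow> \<exists>x\<in>K. \<forall>k. x \<in> psiw phi v k ` K"
    proof -
      fix v assume v: "v \<in> infwords (length rho)"
      define F where "F k = psiw phi v k ` K" for k
      have Fc: "compact (F k)" for k unfolding F_def by (rule compact_continuous_image[OF cont[OF v] cp])
      have Fn: "F k \<noteq> {}" for k unfolding F_def using ne by simp
      have "F (Suc k) \<subseteq> F k" for k
      proof -
        have vk: "v k < length rho" using v unfolding infwords_def by auto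
        have "F (Suc k) = psiw phi v k ` (phi (v k) ` K)" unfolding F_def psiw_Suc_right by (simp add: image_comp)
        also have "\<dots> \<subseteq> F k" unfolding F_def using sub[OF vk] by (rule image_mono)
        finally show ?thesis .
      qed
      then have "decseq F" by (rule decseq_SucI)
      then have "\<And>m n. m \<le> n \<Longrightarrow> F n \<subseteq> F m" using decseqD by blast
      from compact_nest[of F, OF Fc Fn this] obtain x where x: "x \<in> \<Inter>(range F)" by blast
      then have "x \<in> K" using F_def by (metis InterE psiw.simps(1) id_apply image_id rangeI)
      with x show "\<exists>x\<in>K. \<forall>k. x \<in> psiw phi v k ` K" unfolding F_def by blast
    qed
  qed
  then show ?thesis by (rule dls.lipeq_addr)
qed



definition pre :: "nat list \<Rightarrow> (nat \<Rightarrow> nat) \<Rightarrow> nat \<Rightarrow> nat" where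
  "pre u w = (\<lambda>i. if i < length u then u ! i else w (i - length u))"

lemma pre_Nil: "pre [] w = w" unfolding pre_def by simp
lemma pre_Cons0: "pre (a # u) w 0 = a" unfolding pre_def by simp
lemma shft_pre: "shft (pre (a # u) w) = pre u w" unfolding pre_def shft_def by auto

lemma pre_inf: "\<forall>a\<in>set u. a < m \<Longrightarrow> w \<in> infwords m \<Longrightarrow> pre u w \<in> infwords m"
  unfolding pre_def infwords_def by auto

lemma dl_cons: assumes "a 0 = b 0" shows "dl r a b = r ! (a 0) * dl r (shft a) (shft b)"
proof (cases "a = b")
  case True then show ?thesis by (simp add: dl_def)
next
  case False
  have ne: "shft a \<noteq> shft b"
  proof
    assume "shft a = shft b"
    then have "a (Suc i) = b (Suc i)" for i unfolding shft_def by metis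
    with assms have "a i = b i" for i by (cases i) auto
    with False show False by auto
  qed
  obtain n where n: "a n \<noteq> b n" using False by auto
  have "fd a b = Suc (fd (shft a) (shft b))"
    unfolding fd_def shft_def by (rule Least_Suc[of _ n]) (use n assms in auto)
  then show ?thesis using False ne by (simp add: dl_def pr_Suc)
qed

lemma dl_pre: "dl r (pre u w) (pre u v) = word_ratio r u * dl r w v"
proof (induction u)
  case Nil then show ?case by (simp add: pre_Nil word_ratio_def)
next
  case (Cons a u)
  have "dl r (pre (a # u) w) (pre (a # u) v) = r ! a * dl r (pre u w) (pre u v)"
    using dl_cons[of "pre (a # u) w" "pre (a # u) v" r] by (simp add: pre_Cons0 shft_pre)
  then show ?case using Cons by (simp add: word_ratio_def)
qed

lemma pr_ge: assumes "v \<in> infwords (length r)" "\<forall>t<length r. 0 < r!t \<and> r!t < 1"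
  shows "Min (set r) ^ k \<le> pr r v k"
proof -
  have ne: "r \<noteq> []" using assms(1) unfolding infwords_def by auto
  have "Min (set r) \<in> set r" using ne by (intro Min_in) auto
  then have m0: "0 \<le> Min (set r)" using assms(2) by (auto simp: in_set_conv_nth intro: less_imp_le)
  have "Min (set r) \<le> r ! (v i)" for i using assms(1) unfolding infwords_def by (intro Min_le) auto
  with m0 have "\<forall>i. Min (set r) \<le> r ! (v i) \<and> 0 \<le> Min (set r)" by simp
  then have "(\<Prod>i<k. Min (set r)) \<le> pr r v k" unfolding pr_def by (intro prod_mono) auto
  then show ?thesis by simp
qed

function conc :: "nat list list \<Rightarrow> (nat \<Rightarrow> nat) \<Rightarrow> nat \<Rightarrow> nat" where
  "conc js v p = (if js ! (v 0) = [] then 0 else if p < length (js ! (v 0)) then js ! (v 0) ! p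
     else conc js (shft v) (p - length (js ! (v 0))))"
  by auto
termination by (relation "Wellfounded.measure (\<lambda>(js,v,p). p)") (simp_all add: in_measure, metis diff_less length_greater_0_conv less_le_trans not_le)

declare conc.simps[simp del]

lemma conc_eq: "js ! (v 0) \<noteq> [] \<Longrightarrow> conc js v = pre (js ! (v 0)) (conc js (shft v))"
  by (rule ext, subst conc.simps) (simp add: pre_def)

lemma conc_inf: "\<forall>i. js ! (v i) \<in> finwords m \<Longrightarrow> conc js v p < m"
proof (induction js v p rule: conc.induct)
  case (1 js v p)
  have f: "js ! (v 0) \<in> finwords m" using 1(2) by simp
  show ?case
  proof (cases "p < length (js ! (v 0))")
    case True then show ?thesis using f by (subst conc.simps) (auto simp: finwords_def)
  next
    case False
    have "\<forall>i. js ! (shft v i) \<in> finwords m" using 1(2) by (simp add: shft_def)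
    then have "conc js (shft v) (p - length (js ! (v 0))) < m" using 1(1) f False by (simp add: finwords_def)
    then show ?thesis using False f by (subst conc.simps) (simp add: finwords_def)
  qed
qed

lemma cyl_disj_diff:
  assumes "u \<in> finwords m" "u' \<in> finwords m" "u \<noteq> u'" "cylinder m u \<inter> cylinder m u' = {}"
  shows "\<exists>i<min (length u) (length u'). u ! i \<noteq> u' ! i"
proof (rule ccontr)
  assume "\<not> ?thesis"
  then have eq: "\<forall>i<min (length u) (length u'). u ! i = u' ! i" by auto
  have m: "0 < m" using assms(1) unfolding finwords_def by (cases u) auto
  have z0: "(\<lambda>_. 0::nat) \<in> infwords m" using m unfolding infwords_def by simp
  show False
  proof (cases "length u \<le> length u'")
    case True
    let ?z = "pre u' (\<lambda>_. 0)"
    have "?z \<in> infwords m" using pre_inf assms(2) z0 unfolding finwords_def by blast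
    moreover have "\<forall>k<length u'. ?z k = u' ! k" unfolding pre_def by simp
    moreover have "\<forall>k<length u. ?z k = u ! k" using eq True unfolding pre_def by auto
    ultimately have "?z \<in> cylinder m u \<inter> cylinder m u'" unfolding cylinder_def by simp
    with assms(4) show False by blast
  next
    case False
    let ?z = "pre u (\<lambda>_. 0)"
    have "?z \<in> infwords m" using pre_inf assms(1) z0 unfolding finwords_def by blast
    moreover have "\<forall>k<length u. ?z k = u ! k" unfolding pre_def by simp
    moreover have "\<forall>k<length u'. ?z k = u' ! k" using eq False unfolding pre_def by auto
    ultimately have "?z \<in> cylinder m u \<inter> cylinder m u'" unfolding cylinder_def by simp
    with assms(4) show False by blast
  qed
qed

lemma symbolic:
  assumes cr: "contraction_vector dd rho" and ct: "contraction_vector dd tau"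
    and js: "distinct js" "cut_set (length rho) (set js)" "tau = map (word_ratio rho) js"
  shows "lipeq (infwords (length rho)) (dl rho) (infwords (length tau)) (dl tau)"
proof -
  let ?m = "length rho"
  let ?psi = "\<lambda>t. pre (js ! t)"
  define L where "L = Max (length ` set js)"
  define c where "c = Min (set rho) ^ L"
  have lt: "length tau = length js" using js(3) by simp
  have ratr: "\<forall>t<length rho. 0 < rho!t \<and> rho!t < 1" using cv_ratio[OF cr] .
  have ratt: "\<forall>t<length tau. 0 < tau!t \<and> tau!t < 1" using cv_ratio[OF ct] .
  have rne: "rho \<noteq> []" using cr unfolding contraction_vector_def by simp
  have mi: "Min (set rho) \<in> set rho" using rne by (intro Min_in) auto
  have minpos: "0 < Min (set rho)" "Min (set rho) \<le> 1"
  proof -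
    show "0 < Min (set rho)" using mi ratr by (auto simp: in_set_conv_nth)
    have "Min (set rho) \<le> rho ! 0" using rne by (intro Min_le) auto
    also have "\<dots> \<le> 1" using ratr rne by (auto intro: less_imp_le)
    finally show "Min (set rho) \<le> 1" .
  qed
  have jsfin: "js ! t \<in> finwords ?m" if "t < length js" for t
    using js(2) that unfolding cut_set_def by auto
  have dl0: "0 \<le> dl rho w v" if "w \<in> infwords ?m" for w v
    using pr_pos_le[OF that ratr] unfolding dl_def by (simp add: less_imp_le)
  have "dls tau (infwords ?m) (dl rho) ?psi 1 c"
  proof
    show "\<And>t x. t < length tau \<Longrightarrow> x \<in> infwords ?m \<Longrightarrow> ?psi t x \<in> infwords ?m"
      using jsfin lt pre_inf unfolding finwords_def by auto
    show "\<And>t x y. t < length tau \<Longrightarrow> x \<in> infwords ?m \<Longrightarrow> y \<in> infwords ?m \<Longrightarrow>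
       dl rho (?psi t x) (?psi t y) = tau ! t * dl rho x y"
      using dl_pre js(3) lt by simp
    show "\<And>x. x \<in> infwords ?m \<Longrightarrow> \<exists>t<length tau. x \<in> ?psi t ` infwords ?m"
    proof -
      fix x assume x: "x \<in> infwords ?m"
      have "x \<in> (\<Union>j\<in>set js. cylinder ?m j)" using js(2) x unfolding cut_set_def by simp
      then obtain j where j: "j \<in> set js" "x \<in> cylinder ?m j" by blast
      obtain t where t: "t < length js" "j = js ! t" using j(1) by (auto simp: in_set_conv_nth)
      let ?y = "\<lambda>i. x (i + length j)"
      have "?y \<in> infwords ?m" using x unfolding infwords_def by auto
      moreover have "x = pre j ?y" using j(2) unfolding pre_def cylinder_def by auto
      ultimately show "\<exists>t<length tau. x \<in> ?psi t ` infwords ?m" using t lt by auto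
    qed
    show "\<And>x y. x \<in> infwords ?m \<Longrightarrow> y \<in> infwords ?m \<Longrightarrow> dl rho x y \<le> 1"
    proof -
      fix x y assume x: "x \<in> infwords ?m"
      have all: "\<forall>a\<in>set rho. 0 \<le> a \<and> a \<le> 1" using ratr by (metis in_set_conv_nth less_imp_le)
      have q: "Max (set rho) \<le> 1" using all rne by (intro Max.boundedI) auto
      have "Max (set rho) \<in> set rho" using rne by (intro Max_in) auto
      then have "0 \<le> Max (set rho)" using all by blast
      then have "Max (set rho) ^ k \<le> 1" for k using q by (simp add: power_le_one)
      then show "dl rho x y \<le> 1" using pr_pos_le[OF x ratr] unfolding dl_def by (auto intro: order_trans)
    qed
    show "0 < c" unfolding c_def using minpos by simp
    show "\<And>s t x y. s < length tau \<Longrightarrow> t < length tau \<Longrightarrow> s \<noteq> t \<Longrightarrow> x \<in> infwords ?m \<Longrightarrow> y \<in> infwords ?m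
       \<Longrightarrow> c \<le> dl rho (?psi s x) (?psi t y)"
    proof -
      fix s t x y assume h: "s < length tau" "t < length tau" "s \<noteq> t" "x \<in> infwords ?m" "y \<in> infwords ?m"
      have ne: "js ! s \<noteq> js ! t" using js(1) h lt by (simp add: nth_eq_iff_index_eq)
      have dj: "cylinder ?m (js ! s) \<inter> cylinder ?m (js ! t) = {}"
        using js(2) h lt ne unfolding cut_set_def by auto
      obtain i where i: "i < min (length (js ! s)) (length (js ! t))" "js ! s ! i \<noteq> js ! t ! i"
        using cyl_disj_diff[OF jsfin jsfin ne dj] h lt by auto
      let ?a = "?psi s x" and ?b = "?psi t y"
      have ai: "?a \<in> infwords ?m" using jsfin h lt pre_inf unfolding finwords_def by auto
      have dif: "?a i \<noteq> ?b i" using i unfolding pre_def by auto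
      then have neq: "?a \<noteq> ?b" by auto
      have "fd ?a ?b \<le> i" unfolding fd_def using dif by (rule Least_le)
      also have "i \<le> L"
      proof -
        have "length (js ! s) \<le> L" unfolding L_def using h lt by (intro Max_ge) auto
        then show ?thesis using i by linarith
      qed
      finally have fL: "fd ?a ?b \<le> L" .
      have "c \<le> Min (set rho) ^ fd ?a ?b" unfolding c_def using minpos fL by (intro power_decreasing) auto
      also have "\<dots> \<le> pr rho ?a (fd ?a ?b)" by (rule pr_ge[OF ai ratr])
      finally show "c \<le> dl rho ?a ?b" using neq by (simp add: dl_def)
    qed
    show "\<And>x y. x \<in> infwords ?m \<Longrightarrow> y \<in> infwords ?m \<Longrightarrow> 0 \<le> dl rho x y" using dl0 by blast
    show "\<And>x. x \<in> infwords ?m \<Longrightarrow> dl rho x x = 0" by (simp add: dl_def)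
    show "\<And>x y. x \<in> infwords ?m \<Longrightarrow> y \<in> infwords ?m \<Longrightarrow> dl rho x y = 0 \<Longrightarrow> x = y"
      using pr_pos_le ratr unfolding dl_def by (metis less_irrefl)
    show "\<forall>t<length tau. 0 < tau ! t \<and> tau ! t < 1" by (rule ratt)
    show "\<And>v. v \<in> infwords (length tau) \<Longrightarrow> \<exists>x\<in>infwords ?m. \<forall>k. x \<in> psiw ?psi v k ` infwords ?m"
    proof -
      fix v assume v: "v \<in> infwords (length tau)"
      have cin: "conc js v' \<in> infwords ?m" if "v' \<in> infwords (length tau)" for v'
        using conc_inf[of js v' ?m] jsfin that lt unfolding infwords_def by auto
      have "conc js v' \<in> psiw ?psi v' k ` infwords ?m" if "v' \<in> infwords (length tau)" for v' k
        using that
      proof (induction k arbitrary: v')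
        case 0 then show ?case using cin by simp
      next
        case (Suc k)
        have v0: "v' 0 < length js" using Suc.prems lt unfolding infwords_def by auto
        have nn: "js ! (v' 0) \<noteq> []" using jsfin[OF v0] unfolding finwords_def by simp
        have "conc js (shft v') \<in> psiw ?psi (shft v') k ` infwords ?m"
          using Suc.IH[OF shft_inf[OF Suc.prems]] .
        then show ?case using conc_eq[of js v', OF nn] by (auto simp: image_comp)
      qed
      then show "\<exists>x\<in>infwords ?m. \<forall>k. x \<in> psiw ?psi v k ` infwords ?m" using cin v by blast
    qed
  qed
  then have "lipeq (infwords ?m) (dl rho) (infwords (length tau)) (dl tau)" by (rule dls.lipeq_addr)
  then show ?thesis .
qed



lemma chain: "(equiv_step dd)\<^sup>*\<^sup>* rho s \<Longrightarrow>
   lipeq (infwords (length rho)) (dl rho) (infwords (length s)) (dl s)"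
proof (induction rule: rtranclp_induct)
  case base then show ?case by (rule lipeq_refl)
next
  case (step s s')
  from step.hyps(2) have cs: "contraction_vector dd s" "contraction_vector dd s'"
    and dv: "derived_from s' s \<or> derived_from s s'" unfolding equiv_step_def by auto
  have "lipeq (infwords (length s)) (dl s) (infwords (length s')) (dl s')"
    using dv
  proof
    assume "derived_from s' s"
    then obtain js where "distinct js" "cut_set (length s) (set js)" "s' = map (word_ratio s) js"
      unfolding derived_from_def by blast
    then show ?thesis by (rule symbolic[OF cs(1) cs(2)])
  next
    assume "derived_from s s'"
    then obtain js where "distinct js" "cut_set (length s') (set js)" "s = map (word_ratio s') js"
      unfolding derived_from_def by blast
    then show ?thesis by (rule lipeq_sym[OF symbolic[OF cs(2) cs(1)]])
  qed
  with step.IH show ?case by (rule lipeq_trans)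
qed

theorem proposition1p3:
  fixes rho tau :: "real list"
  assumes "contraction_vector DIM('a::euclidean_space) rho"
    and "contraction_vector DIM('a) tau"
    and "equivalent_cv DIM('a) rho tau"
  shows "\<forall>E \<in> (dustlike rho :: 'a set set). \<forall>F \<in> (dustlike tau :: 'a set set).
           lipschitz_equivalent E F"
proof (intro ballI)
  fix E F :: "'a set" assume E: "E \<in> dustlike rho" and F: "F \<in> dustlike tau"
  have c: "lipeq (infwords (length rho)) (dl rho) (infwords (length tau)) (dl tau)"
    using assms(3) unfolding equivalent_cv_def by (intro chain[of "DIM('a)"]) simp
  have a: "lipeq E dist (infwords (length rho)) (dl rho)" by (rule geometric[OF assms(1) E])
  have b: "lipeq (infwords (length tau)) (dl tau) F dist" by (rule lipeq_sym[OF geometric[OF assms(2) F]])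
  have "lipeq E dist F dist" by (rule lipeq_trans[OF lipeq_trans[OF a c] b])
  then show "lipschitz_equivalent E F" unfolding lipeq_def lipschitz_equivalent_def .
qed


end
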